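(* Let $P\in\mathcal B\setminus\mathcal B_0$, with coordinates normalized so that $P=(0,0)$. For every $0<\alpha\le1$ there exist $U',V'<0$ (close to $0$) and a constant $I_0>0$ depending on the initial data such that, in the region $D_0=\{(u,v):U'\le u\le 0,\ V'\le v\le0,\ r(u,v)>0\}\subset\mathcal T$, $$|\partial_u\phi(u,v)|\le\frac{I_0}{r(u,v)^{3+\alpha}},\qquad|\partial_v\phi(u,v)|\le\frac{I_0}{r(u,v)^{3+\alpha}}.$$
   Context: Consider the Einstein–scalar field system under spherical symmetry in double null coordinates, $g=-\Omega^2(u,v)\,du\,dv+r^2(u,v)(d\theta^2+\sin^2\theta\,d\varphi^2)$, with scalar field $\phi$; the equations are $r\partial_u\partial_v r=-\partial_ur\,\partial_vr-\frac14\Omega^2$, $r^2\partial_u\partial_v\log\Omega=\partial_ur\,\partial_vr+\frac14\Omega^2-r^2\partial_u\phi\,\partial_v\phi$, $r\partial_u\partial_v\phi=-\partial_ur\,\partial_v\phi-\partial_vr\,\partial_u\phi$, $\partial_u(\Omega^{-2}\partial_ur)=-r\Omega^{-2}(\partial_u\phi)^2$, $\partial_v(\Omega^{-2}\partial_vr)=-r\Omega^{-2}(\partial_v\phi)^2$. We consider the maximal development of Christodoulou's spherically symmetric characteristic data in which a trapped surface forms; $\mathcal T=\{\partial_vr<0,\partial_ur<0,r>0\}$ is the trapped region, $\mathcal B$ the singular future boundary (where $r=0$), $\mathcal B_0$ the first singular point on the centre, and $\mathcal B\setminus\mathcal B_0$ a spacelike $C^1$ curve. Known fact (Christodoulou):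 for $P\in\mathcal B\setminus\mathcal B_0$, $-r\partial_ur\to C_1>0$ and $-r\partial_vr\to C_2>0$ at $P$, continuously along $\mathcal B$, so that in a sufficiently small $D_0$ one has $r\partial_ur+C_1=o(1)$, $r\partial_vr+C_2=o(1)$. *)

theory Defs
  imports "HOL-Analysis.Analysis"
begin

definition du :: "(real \<times> real \<Rightarrow> real) \<Rightarrow> real \<times> real \<Rightarrow> real" where
  "du f p = deriv (\<lambda>s. f (s, snd p)) (fst p)"

definition dv :: "(real \<times> real \<Rightarrow> real) \<Rightarrow> real \<times> real \<Rightarrow> real" where
  "dv f p = deriv (\<lambda>t. f (fst p, t)) (snd p)"

definition C1_on :: "(real \<times> real) set \<Rightarrow> (real \<times> real \<Rightarrow> real) \<Rightarrow> bool" where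
  "C1_on Q f \<longleftrightarrow>
     (\<forall>p\<in>Q. (\<lambda>s. f (s, snd p)) differentiable (at (fst p))
            \<and> (\<lambda>t. f (fst p, t)) differentiable (at (snd p)))
     \<and> continuous_on Q f \<and> continuous_on Q (du f) \<and> continuous_on Q (dv f)"

definition C2_on :: "(real \<times> real) set \<Rightarrow> (real \<times> real \<Rightarrow> real) \<Rightarrow> bool" where
  "C2_on Q f \<longleftrightarrow> C1_on Q f \<and> C1_on Q (du f) \<and> C1_on Q (dv f)"

text \<open>Spherically symmetric Einstein--scalar field system in double null gauge.\<close>

definition ESF_solution ::
  "(real \<times> real) set \<Rightarrow> (real \<times> real \<Rightarrow> real) \<Rightarrow> (real \<times> real \<Rightarrow> real)
     \<Rightarrow> (real \<times> real \<Rightarrow> real) \<Rightarrow> bool" where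
  "ESF_solution Q r \<Omega> \<phi> \<longleftrightarrow>
     open Q \<and> C2_on Q r \<and> C2_on Q \<Omega> \<and> C2_on Q \<phi> \<and>
     (\<forall>p\<in>Q. r p > 0 \<and> \<Omega> p > 0) \<and>
     (\<forall>p\<in>Q.
        r p * du (dv r) p = - du r p * dv r p - (1/4) * (\<Omega> p)\<^sup>2
      \<and> (r p)\<^sup>2 * du (dv (\<lambda>q. ln (\<Omega> q))) p
          = du r p * dv r p + (1/4) * (\<Omega> p)\<^sup>2 - (r p)\<^sup>2 * du \<phi> p * dv \<phi> p
      \<and> r p * du (dv \<phi>) p = - du r p * dv \<phi> p - dv r p * du \<phi> p
      \<and> du (\<lambda>q. du r q / (\<Omega> q)\<^sup>2) p = - r p * (du \<phi> p)\<^sup>2 / (\<Omega> p)\<^sup>2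
      \<and> dv (\<lambda>q. dv r q / (\<Omega> q)\<^sup>2) p = - r p * (dv \<phi> p)\<^sup>2 / (\<Omega> p)\<^sup>2)"

definition trapped_region ::
  "(real \<times> real) set \<Rightarrow> (real \<times> real \<Rightarrow> real) \<Rightarrow> (real \<times> real) set" where
  "trapped_region Q r = {p \<in> Q. dv r p < 0 \<and> du r p < 0 \<and> r p > 0}"

end

theory Submission imports Defs begin


lemma C1_du_deriv:
  assumes "C1_on Q f" "(u,v) \<in> Q"
  shows "((\<lambda>s. f (s, v)) has_real_derivative du f (u,v)) (at u)"
  using assms unfolding C1_on_def du_def
  by (metis DERIV_deriv_iff_real_differentiable fst_conv snd_conv)

lemma C1_dv_deriv:
  assumes "C1_on Q f" "(u,v) \<in> Q"
  shows "((\<lambda>t. f (u, t)) has_real_derivative dv f (u,v)) (at v)"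
  using assms unfolding C1_on_def dv_def
  by (metis DERIV_deriv_iff_real_differentiable fst_conv snd_conv)

lemma dist_pair_le: "dist (s::real,t::real) (u,v) \<le> \<bar>s-u\<bar> + \<bar>t-v\<bar>"
proof -
  have "dist (s,t) (u,v) \<le> dist (s,t) (u,t) + dist (u,t) (u,v)" by (rule dist_triangle)
  also have "\<dots> = \<bar>s-u\<bar> + \<bar>t-v\<bar>" by (simp add: dist_Pair_Pair dist_real_def)
  finally show ?thesis .
qed

lemma schwarz:
  assumes Qo: "open Q" and f1: "C1_on Q f" and f2: "C1_on Q (du f)" and f3: "C1_on Q (dv f)"
    and pQ: "(u,v) \<in> Q"
  shows "dv (du f) (u,v) = du (dv f) (u,v)"
proof (rule ccontr)
  define a where "a = dv (du f) (u,v)"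
  define c where "c = du (dv f) (u,v)"
  assume "dv (du f) (u,v) \<noteq> du (dv f) (u,v)"
  then have ac: "a \<noteq> c" by (simp add: a_def c_def)
  define e where "e = \<bar>a - c\<bar> / 2"
  have e0: "e > 0" using ac by (simp add: e_def)
  have ca: "continuous_on Q (dv (du f))" using f2 by (simp add: C1_on_def)
  have cc: "continuous_on Q (du (dv f))" using f3 by (simp add: C1_on_def)
  obtain d0 where d0: "d0 > 0" "ball (u,v) d0 \<subseteq> Q" using Qo pQ open_contains_ball by blast
  obtain d1 where d1: "d1 > 0" "\<forall>q\<in>Q. dist q (u,v) < d1 \<longrightarrow> dist (dv (du f) q) a < e"
    using ca pQ e0 unfolding continuous_on_iff a_def by blast
  obtain d2 where d2: "d2 > 0" "\<forall>q\<in>Q. dist q (u,v) < d2 \<longrightarrow> dist (du (dv f) q) c < e"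
    using cc pQ e0 unfolding continuous_on_iff c_def by blast
  define h where "h = min d0 (min d1 d2) / 3"
  have h0: "h > 0" using d0 d1 d2 by (simp add: h_def)
  have inb: "dist (s,t) (u,v) < min d0 (min d1 d2)" if "u \<le> s" "s \<le> u+h" "v \<le> t" "t \<le> v+h" for s t
  proof -
    have "dist (s,t) (u,v) \<le> \<bar>s-u\<bar> + \<bar>t-v\<bar>" by (rule dist_pair_le)
    also have "\<dots> \<le> 2*h" using that by simp
    also have "\<dots> < min d0 (min d1 d2)" using h0 d0 d1 d2 unfolding h_def by linarith
    finally show ?thesis .
  qed
  have inQ: "(s,t) \<in> Q" if "u \<le> s" "s \<le> u+h" "v \<le> t" "t \<le> v+h" for s t
    using inb[OF that] d0 by (auto simp: dist_commute)
  have close1: "\<bar>dv (du f) (s,t) - a\<bar> < e" if "u \<le> s" "s \<le> u+h" "v \<le> t" "t \<le> v+h" for s t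
    using inb[OF that] d1 inQ[OF that] by (auto simp: dist_real_def)
  have close2: "\<bar>du (dv f) (s,t) - c\<bar> < e" if "u \<le> s" "s \<le> u+h" "v \<le> t" "t \<le> v+h" for s t
    using inb[OF that] d2 inQ[OF that] by (auto simp: dist_real_def)
  define D where "D = f (u+h,v+h) - f (u,v+h) - f (u+h,v) + f (u,v)"
  obtain \<xi> where \<xi>: "u < \<xi>" "\<xi> < u+h"
    "(\<lambda>s. f (s,v+h) - f (s,v)) (u+h) - (\<lambda>s. f (s,v+h) - f (s,v)) u
       = (u+h-u) * (du f (\<xi>,v+h) - du f (\<xi>,v))"
  proof -
    have "\<exists>z. u < z \<and> z < u+h \<and> (\<lambda>s. f (s,v+h) - f (s,v)) (u+h) - (\<lambda>s. f (s,v+h) - f (s,v)) u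
       = (u+h-u) * (du f (z,v+h) - du f (z,v))"
      apply (rule MVT2) using h0 apply simp
      apply (intro DERIV_diff C1_du_deriv[OF f1]) using inQ h0 by auto
    then show ?thesis using that by blast
  qed
  obtain \<eta> where \<eta>: "v < \<eta>" "\<eta> < v+h" "du f (\<xi>,v+h) - du f (\<xi>,v) = (v+h-v) * dv (du f) (\<xi>,\<eta>)"
  proof -
    have "\<exists>z. v < z \<and> z < v+h \<and> du f (\<xi>,v+h) - du f (\<xi>,v) = (v+h-v) * dv (du f) (\<xi>,z)"
      apply (rule MVT2[where f="\<lambda>t. du f (\<xi>,t)"]) using h0 apply simp
      apply (intro C1_dv_deriv[OF f2]) using inQ h0 \<xi> by auto
    then show ?thesis using that by blast
  qed
  obtain \<eta>' where \<eta>': "v < \<eta>'" "\<eta>' < v+h"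
    "(\<lambda>t. f (u+h,t) - f (u,t)) (v+h) - (\<lambda>t. f (u+h,t) - f (u,t)) v
       = (v+h-v) * (dv f (u+h,\<eta>') - dv f (u,\<eta>'))"
  proof -
    have "\<exists>z. v < z \<and> z < v+h \<and> (\<lambda>t. f (u+h,t) - f (u,t)) (v+h) - (\<lambda>t. f (u+h,t) - f (u,t)) v
       = (v+h-v) * (dv f (u+h,z) - dv f (u,z))"
      apply (rule MVT2) using h0 apply simp
      apply (intro DERIV_diff C1_dv_deriv[OF f1]) using inQ h0 by auto
    then show ?thesis using that by blast
  qed
  obtain \<xi>' where \<xi>': "u < \<xi>'" "\<xi>' < u+h" "dv f (u+h,\<eta>') - dv f (u,\<eta>') = (u+h-u) * du (dv f) (\<xi>',\<eta>')"
  proof -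
    have "\<exists>z. u < z \<and> z < u+h \<and> dv f (u+h,\<eta>') - dv f (u,\<eta>') = (u+h-u) * du (dv f) (z,\<eta>')"
      apply (rule MVT2[where f="\<lambda>s. dv f (s,\<eta>')"]) using h0 apply simp
      apply (intro C1_du_deriv[OF f3]) using inQ h0 \<eta>' by auto
    then show ?thesis using that by blast
  qed
  have "D = h * (h * dv (du f) (\<xi>,\<eta>))" using \<xi>(3) \<eta>(3) by (simp add: D_def algebra_simps)
  moreover have "D = h * (h * du (dv f) (\<xi>',\<eta>'))" using \<eta>'(3) \<xi>'(3) by (simp add: D_def algebra_simps)
  ultimately have eq: "dv (du f) (\<xi>,\<eta>) = du (dv f) (\<xi>',\<eta>')" using h0 by simp
  have "\<bar>dv (du f) (\<xi>,\<eta>) - a\<bar> < e" using close1 \<xi> \<eta> by simp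
  moreover have "\<bar>du (dv f) (\<xi>',\<eta>') - c\<bar> < e" using close2 \<xi>' \<eta>' by simp
  ultimately have "\<bar>a - c\<bar> < 2*e" using eq by linarith
  then show False by (simp add: e_def)
qed



lemma key1d:
  fixes h hd rho rd :: "real \<Rightarrow> real"
  assumes ax: "a \<le> x"
    and hD: "\<And>s. s\<in>{a..x} \<Longrightarrow> (h has_real_derivative hd s) (at s)"
    and rD: "\<And>s. s\<in>{a..x} \<Longrightarrow> (rho has_real_derivative rd s) (at s)"
    and rpos: "\<And>s. s\<in>{a..x} \<Longrightarrow> rho s > 0"
    and rc: "\<And>s. s\<in>{a..x} \<Longrightarrow> c \<le> - rho s * rd s"
    and c0: "c > 0"
    and hb: "\<And>s. s\<in>{a..x} \<Longrightarrow> \<bar>hd s\<bar> \<le> L * rho s powr (-P-2)"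
    and L0: "L \<ge> 0" and P0: "P > 0"
  shows "\<bar>h x\<bar> \<le> \<bar>h a\<bar> + L/(P*c) * rho x powr (-P)"
proof -
  define k where "k s = L/(P*c) * rho s powr (-P)" for s
  define kd where "kd s = L/(P*c) * (-P * rho s powr (-P - 1) * rd s)" for s
  have kD: "(k has_real_derivative kd s) (at s)" if "s\<in>{a..x}" for s
  proof -
    have "((\<lambda>s. rho s powr (-P)) has_real_derivative (-P) * rho s powr (-P - of_nat 1) * rd s) (at s)"
      by (rule DERIV_fun_powr[OF rD[OF that] rpos[OF that]])
    then have "((\<lambda>s. L/(P*c) * rho s powr (-P)) has_real_derivative L/(P*c) * ((-P) * rho s powr (-P - 1) * rd s)) (at s)"
      by (intro DERIV_cmult) simp
    then show ?thesis unfolding k_def kd_def by simp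
  qed
  have kge: "\<bar>hd s\<bar> \<le> kd s" if "s\<in>{a..x}" for s
  proof -
    have rp: "rho s > 0" using rpos[OF that] .
    have e: "rho s powr (-P - 1) = rho s powr (-P-2) * rho s"
    proof -
      have "-P-1 = -P-2+1" by simp then have "rho s powr (-P-1) = rho s powr (-P-2+1)" by metis
      also have "\<dots> = rho s powr (-P-2) * rho s powr 1" by (rule powr_add)
      also have "\<dots> = rho s powr (-P-2) * rho s" using rp by simp
      finally show ?thesis .
    qed
    have "kd s = L/c * rho s powr (-P-2) * (- rho s * rd s)"
      unfolding kd_def e using P0 by (simp add: field_simps)
    also have "\<dots> \<ge> L/c * rho s powr (-P-2) * c"
      using rc[OF that] L0 c0 rp by (intro mult_left_mono) auto
    finally have "kd s \<ge> L * rho s powr (-P-2)" using c0 by simp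
    then show ?thesis using hb[OF that] by linarith
  qed
  have m1: "k a - h a \<le> k x - h x"
    by (rule deriv_nonneg_imp_mono[where g="\<lambda>s. k s - h s" and g'="\<lambda>s. kd s - hd s", simplified])
       (use kD hD kge ax in \<open>auto intro!: DERIV_diff simp: abs_le_iff\<close>)
  have m2: "k a + h a \<le> k x + h x"
    by (rule deriv_nonneg_imp_mono[where g="\<lambda>s. k s + h s" and g'="\<lambda>s. kd s + hd s", simplified])
       (use kD hD kge ax in \<open>auto intro!: DERIV_add simp: abs_le_iff\<close>, smt (verit) atLeastAtMost_iff kge)
  have "k a \<ge> 0" unfolding k_def using L0 P0 c0 by simp
  then show ?thesis using m1 m2 unfolding k_def by linarith
qed



lemma decr1d:
  fixes rho rd :: "real \<Rightarrow> real"
  assumes "a \<le> x" "\<And>s. s\<in>{a..x} \<Longrightarrow> (rho has_real_derivative rd s) (at s)"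
    "\<And>s. s\<in>{a..x} \<Longrightarrow> rd s \<le> 0"
  shows "rho x \<le> rho a"
proof -
  have "(\<lambda>s. - rho s) a \<le> (\<lambda>s. - rho s) x"
    by (rule deriv_nonneg_imp_mono[where g'="\<lambda>s. - rd s"]) (use assms in \<open>auto intro!: DERIV_minus\<close>)
  then show ?thesis by simp
qed

lemma powr_m2: "(x::real) > 0 \<Longrightarrow> x powr (-P) / x^2 = x powr (-P-2)"
  by (simp add: powr_diff powr_minus field_simps powr_numeral)

lemma cont_bound:
  fixes f :: "real\<times>real \<Rightarrow> real"
  assumes "continuous_on Q f" "compact K" "K \<subseteq> Q"
  shows "\<exists>B. \<forall>q\<in>K. f q \<le> B"
proof -
  have "compact (f ` K)" using assms by (meson compact_continuous_image continuous_on_subset)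
  then obtain B where "\<forall>y\<in>f ` K. norm y \<le> B" using compact_imp_bounded bounded_iff by metis
  then show ?thesis by (metis image_eqI real_norm_def abs_le_iff)
qed

lemma lin2:
  fixes Mf Mg A B t1 t2 :: real
  assumes "Mf \<le> A + t1*Mg" "Mg \<le> B + t2*Mf" "t1 \<ge> 0" "t2 \<ge> 0" "t1*t2 < 1"
  shows "Mf \<le> (A + t1*B)/(1 - t1*t2)" "Mg \<le> (B + t2*A)/(1 - t1*t2)"
proof -
  have "t1*Mg \<le> t1*(B + t2*Mf)" using assms by (simp add: mult_left_mono)
  then have "Mf * (1 - t1*t2) \<le> A + t1*B" using assms(1) by (simp add: algebra_simps)
  then show "Mf \<le> (A + t1*B)/(1 - t1*t2)" using assms by (simp add: pos_le_divide_eq)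
  have "t2*Mf \<le> t2*(A + t1*Mg)" using assms by (simp add: mult_left_mono)
  then have "Mg * (1 - t1*t2) \<le> B + t2*A" using assms(2) by (simp add: algebra_simps)
  then show "Mg \<le> (B + t2*A)/(1 - t1*t2)" using assms by (simp add: pos_le_divide_eq)
qed



theorem proposition4p2:
  fixes Q :: "(real \<times> real) set"
    and r \<Omega> \<phi> :: "real \<times> real \<Rightarrow> real"
    and b :: "real \<Rightarrow> real"
    and \<epsilon> C1 C2 :: real
  assumes sol: "ESF_solution Q r \<Omega> \<phi>"
    and eps: "\<epsilon> > 0"
    and B_curve: "\<forall>u\<in>{-\<epsilon><..<\<epsilon>}. (b has_real_derivative deriv b u) (at u)"
    and B_C1: "continuous_on {-\<epsilon><..<\<epsilon>} (deriv b)"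
    and B_spacelike: "\<forall>u\<in>{-\<epsilon><..<\<epsilon>}. deriv b u < 0"
    and P_on_B: "b 0 = 0"
    and Q_near_P: "\<forall>u v. (u, v) \<in> ball (0, 0) \<epsilon> \<longrightarrow> ((u, v) \<in> Q \<longleftrightarrow> v < b u)"
    and r_zero_on_B: "\<forall>u\<in>{-\<epsilon><..<\<epsilon>}. (r \<longlongrightarrow> 0) (at (u, b u) within Q)"
    and C1_pos: "C1 > 0" and C2_pos: "C2 > 0"
    and lim_u: "((\<lambda>p. r p * du r p) \<longlongrightarrow> - C1) (at (0, 0) within Q)"
    and lim_v: "((\<lambda>p. r p * dv r p) \<longlongrightarrow> - C2) (at (0, 0) within Q)"
  shows "\<forall>\<alpha>::real. 0 < \<alpha> \<and> \<alpha> \<le> 1 \<longrightarrow>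
           (\<exists>U' V' I0 :: real. U' < 0 \<and> V' < 0 \<and> I0 > 0 \<and>
              (let D0 = {(u, v). U' \<le> u \<and> u \<le> 0 \<and> V' \<le> v \<and> v \<le> 0
                                 \<and> (u, v) \<in> Q \<and> r (u, v) > 0}
               in D0 \<subseteq> trapped_region Q r \<and>
                  (\<forall>p\<in>D0. \<bar>du \<phi> p\<bar> \<le> I0 / r p powr (3 + \<alpha>)
                         \<and> \<bar>dv \<phi> p\<bar> \<le> I0 / r p powr (3 + \<alpha>))))"
proof (intro allI impI)
  fix \<alpha> :: real assume \<alpha>: "0 < \<alpha> \<and> \<alpha> \<le> 1"
  define P where "P = 2 + \<alpha>"
  have P2: "P > 2" using \<alpha> by (simp add: P_def)
  have Qo: "open Q" and r2: "C2_on Q r" and f2: "C2_on Q \<phi>" and rpos: "\<And>p. p\<in>Q \<Longrightarrow> r p > 0"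
    using sol by (auto simp: ESF_solution_def)
  have eqphi: "\<And>p. p\<in>Q \<Longrightarrow> r p * du (dv \<phi>) p = - du r p * dv \<phi> p - dv r p * du \<phi> p"
    using sol by (auto simp: ESF_solution_def)
  have r1: "C1_on Q r" and f1: "C1_on Q \<phi>" and fu: "C1_on Q (du \<phi>)" and fv: "C1_on Q (dv \<phi>)"
    using r2 f2 by (auto simp: C2_on_def)
  have sw: "\<And>u v. (u,v)\<in>Q \<Longrightarrow> dv (du \<phi>) (u,v) = du (dv \<phi>) (u,v)"
    by (rule schwarz[OF Qo f1 fu fv])
  have bpos: "b u > 0" if "-\<epsilon> < u" "u < 0" for u
  proof -
    have "b 0 < b u"
      by (rule DERIV_neg_imp_decreasing[OF \<open>u<0\<close>]) (use that B_curve B_spacelike in \<open>force\<close>)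
    then show ?thesis using P_on_B by simp
  qed
  have ev: "eventually (\<lambda>p. \<bar>r p * du r p + C1\<bar> < C1/3 \<and> \<bar>r p * dv r p + C2\<bar> < C2/3) (at (0,0) within Q)"
  proof -
    have "eventually (\<lambda>p. dist (r p * du r p) (-C1) < C1/3) (at (0,0) within Q)"
      by (rule tendstoD[OF lim_u]) (use C1_pos in simp)
    moreover have "eventually (\<lambda>p. dist (r p * dv r p) (-C2) < C2/3) (at (0,0) within Q)"
      by (rule tendstoD[OF lim_v]) (use C2_pos in simp)
    ultimately show ?thesis by eventually_elim (simp add: dist_real_def)
  qed
  then obtain \<eta>0 where \<eta>0: "\<eta>0 > 0" "\<forall>p\<in>Q. p \<noteq> (0,0) \<and> dist p (0,0) < \<eta>0 \<longrightarrow>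
      \<bar>r p * du r p + C1\<bar> < C1/3 \<and> \<bar>r p * dv r p + C2\<bar> < C2/3"
    unfolding eventually_at by blast
  define L where "L = min \<eta>0 \<epsilon> / 2"
  define U where "U = - L/2"
  have L0: "L > 0" using \<eta>0 eps by (simp add: L_def)
  have U0: "U < 0" using L0 by (simp add: U_def)
  define Sq where "Sq = {U..0} \<times> {U..0}"
  have sqd: "dist (u,v) (0,0) < min \<eta>0 \<epsilon>" if "(u,v) \<in> Sq" for u v
  proof -
    have "dist (u,v) (0,0) \<le> \<bar>u-0\<bar> + \<bar>v-0\<bar>" by (rule dist_pair_le)
    also have "\<dots> \<le> L" using that by (auto simp: Sq_def U_def)
    also have "\<dots> < min \<eta>0 \<epsilon>" using L0 \<eta>0 eps unfolding L_def by linarith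
    finally show ?thesis .
  qed
  have notQ0: "(0,0) \<notin> Q" using Q_near_P eps P_on_B by auto
  have sqQ: "(u,v) \<in> Q" if "(u,v) \<in> Sq" "(u,v) \<noteq> (0,0)" for u v
  proof -
    have "(u,v) \<in> ball (0,0) \<epsilon>" using sqd[OF that(1)] by (simp add: dist_commute)
    moreover have "v < b u"
    proof (cases "u < 0")
      case True
      have "L \<le> \<epsilon>/2" unfolding L_def by linarith
      then have "-\<epsilon> < u" using that(1) eps by (auto simp: Sq_def U_def)
      then show ?thesis using bpos[OF _ True] that(1) by (auto simp: Sq_def)
    next
      case False
      then show ?thesis using that P_on_B by (auto simp: Sq_def)
    qed
    ultimately show ?thesis using Q_near_P by blast
  qed
  define D where "D = {(u, v). U \<le> u \<and> u \<le> 0 \<and> U \<le> v \<and> v \<le> 0 \<and> (u, v) \<in> Q \<and> r (u, v) > 0}"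
  have Dchar: "(u,v) \<in> D \<longleftrightarrow> (u,v) \<in> Sq \<and> (u,v) \<noteq> (0,0)" for u v
    using sqQ notQ0 rpos by (auto simp: D_def Sq_def)
  define c1 where "c1 = 2*C1/3"
  define K1 where "K1 = 4*C1/3"
  define c2 where "c2 = 2*C2/3"
  define K2 where "K2 = 4*C2/3"
  have Dest: "r q > 0 \<and> c1 \<le> - r q * du r q \<and> \<bar>r q * du r q\<bar> \<le> K1
       \<and> c2 \<le> - r q * dv r q \<and> \<bar>r q * dv r q\<bar> \<le> K2 \<and> du r q < 0 \<and> dv r q < 0 \<and> q \<in> Q" if "q \<in> D" for q
  proof -
    obtain u v where q: "q = (u,v)" by force
    have qQ: "q \<in> Q" and qn: "q \<noteq> (0,0)" and qs: "q \<in> Sq" using that Dchar sqQ q by auto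
    have "dist q (0,0) < \<eta>0" using sqd qs q by force
    then have a: "\<bar>r q * du r q + C1\<bar> < C1/3 \<and> \<bar>r q * dv r q + C2\<bar> < C2/3" using \<eta>0 qQ qn by blast
    have rq: "r q > 0" using rpos qQ by blast
    have "r q * du r q < 0" "r q * dv r q < 0" using a C1_pos C2_pos by linarith+
    then have "du r q < 0" "dv r q < 0" using rq by (simp_all add: mult_less_0_iff)
    then show ?thesis using a rq qQ C1_pos C2_pos unfolding c1_def K1_def c2_def K2_def abs_less_iff abs_le_iff
      by (intro conjI; linarith)
  qed
  have cr: "continuous_on Q r" using r1 by (simp add: C1_on_def)
  have cdu: "continuous_on Q (du \<phi>)" using fu by (simp add: C1_on_def)
  have cdv: "continuous_on Q (dv \<phi>)" using fv by (simp add: C1_on_def)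
  define wF where "wF q = \<bar>r q * dv \<phi> q\<bar> * r q powr P" for q
  define wG where "wG q = \<bar>r q * du \<phi> q\<bar> * r q powr P" for q
  have wF0: "wF q \<ge> 0" for q by (simp add: wF_def)
  have wG0: "wG q \<ge> 0" for q by (simp add: wG_def)
  have cwF: "continuous_on Q wF" unfolding wF_def using cr cdv rpos
    by (auto intro!: continuous_intros) (metis less_irrefl)
  have cwG: "continuous_on Q wG" unfolding wG_def using cr cdu rpos
    by (auto intro!: continuous_intros) (metis less_irrefl)
  have cSq: "compact Sq" unfolding Sq_def by (intro compact_Times compact_Icc)
  obtain A0 where A0: "\<forall>q\<in>{U}\<times>{U..0}. wF q \<le> A0"
  proof -
    have "{U}\<times>{U..0} \<subseteq> Q" using sqQ U0 by (auto simp: Sq_def)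
    moreover have "compact ({U}\<times>{U..0})" by (intro compact_Times compact_Icc compact_sing)
    ultimately show ?thesis using cont_bound[OF cwF, of "{U}\<times>{U..0}"] that by blast
  qed
  obtain B0 where B0: "\<forall>q\<in>{U..0}\<times>{U}. wG q \<le> B0"
  proof -
    have "{U..0}\<times>{U} \<subseteq> Q" using sqQ U0 by (auto simp: Sq_def)
    moreover have "compact ({U..0}\<times>{U})" by (intro compact_Times compact_Icc compact_sing)
    ultimately show ?thesis using cont_bound[OF cwG, of "{U..0}\<times>{U}"] that by blast
  qed
  define A where "A = max A0 0"
  define B where "B = max B0 0"
  define T where "T \<delta> = {q\<in>D. \<delta> \<le> r q}" for \<delta>
  have bddT: "bdd_above (wF ` T \<delta>) \<and> bdd_above (wG ` T \<delta>)" if "\<delta> > 0" for \<delta>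
  proof -
    have "(r \<longlongrightarrow> 0) (at (0, 0) within Q)" using r_zero_on_B eps P_on_B by force
    then have "eventually (\<lambda>x. dist (r x) 0 < \<delta>) (at (0,0) within Q)" using that by (rule tendstoD)
    then obtain \<eta> where \<eta>: "\<eta> > 0" "\<forall>x\<in>Q. x \<noteq> (0,0) \<and> dist x (0,0) < \<eta> \<longrightarrow> dist (r x) 0 < \<delta>"
      unfolding eventually_at by blast
    define K where "K = Sq - ball (0,0) \<eta>"
    have cK: "compact K" unfolding K_def using cSq by (intro compact_diff) auto
    have KQ: "K \<subseteq> Q"
    proof
      fix q assume "q \<in> K"
      then have "q \<in> Sq" "q \<noteq> (0,0)" using \<eta> by (auto simp: K_def)
      then show "q \<in> Q" using sqQ by (cases q) auto
    qed
    have TK: "T \<delta> \<subseteq> K"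
    proof
      fix q assume qT: "q \<in> T \<delta>"
      obtain u v where q: "q = (u,v)" by force
      have "q \<in> Sq" "q \<noteq> (0,0)" "q \<in> Q" "\<delta> \<le> r q" using qT Dchar Dest q by (auto simp: T_def)
      moreover have "\<not> dist q (0,0) < \<eta>"
        using \<eta> calculation rpos by (auto simp: dist_real_def)
      ultimately show "q \<in> K" by (auto simp: K_def dist_commute)
    qed
    obtain BF where "\<forall>q\<in>K. wF q \<le> BF" using cont_bound[OF cwF cK KQ] by blast
    moreover obtain BG where "\<forall>q\<in>K. wG q \<le> BG" using cont_bound[OF cwG cK KQ] by blast
    ultimately show ?thesis using TK unfolding bdd_above_def by blast
  qed
  define Mf where "Mf \<delta> = Sup (wF ` T \<delta>)" for \<delta>
  define Mg where "Mg \<delta> = Sup (wG ` T \<delta>)" for \<delta>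
  define \<theta>1 where "\<theta>1 = K2/(P*c1)"
  define \<theta>2 where "\<theta>2 = K1/(P*c2)"
  have th0: "\<theta>1 \<ge> 0" "\<theta>2 \<ge> 0" using C1_pos C2_pos P2
    by (simp_all add: \<theta>1_def \<theta>2_def K1_def K2_def c1_def c2_def)
  have th12: "\<theta>1 * \<theta>2 < 1"
  proof -
    have "\<theta>1 * \<theta>2 = 4 / P^2" using C1_pos C2_pos P2
      by (simp add: \<theta>1_def \<theta>2_def K1_def K2_def c1_def c2_def field_simps power2_eq_square)
    also have "\<dots> < 1"
    proof -
      have "2*2 < P*P" using mult_strict_mono[of 2 P 2 P] P2 by simp
      then show ?thesis by (simp add: power2_eq_square)
    qed
    finally show ?thesis .
  qed
  have rPm: "x powr (-P) * x powr P = 1" if "x > 0" for x :: real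
    using that by (simp add: powr_minus)
  have claimF: "wF (u,v) \<le> A + \<theta>1 * Mg \<delta>" if \<delta>: "\<delta> > 0" and q: "(u,v) \<in> T \<delta>" for \<delta> u v
  proof -
    have qD: "(u,v) \<in> D" and rq: "\<delta> \<le> r (u,v)" using q by (auto simp: T_def)
    have uv: "U \<le> u" "u \<le> 0" "U \<le> v" "v \<le> 0" "(u,v) \<noteq> (0,0)" using qD Dchar by (auto simp: Sq_def)
    have segD: "(s,v) \<in> D" if "s \<in> {U..u}" for s
      using that uv Dchar by (auto simp: Sq_def)
    have segr: "r (u,v) \<le> r (s,v)" if "s \<in> {U..u}" for s
    proof (rule decr1d[where rho="\<lambda>x. r (x,v)" and rd="\<lambda>x. du r (x,v)" and a=s and x=u])
      show "s \<le> u" using that by simp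
      fix x assume x: "x \<in> {s..u}"
      then have "(x,v) \<in> D" using that segD by auto
      then show "((\<lambda>x. r (x,v)) has_real_derivative du r (x,v)) (at x)" "du r (x,v) \<le> 0"
        using Dest C1_du_deriv[OF r1] by (auto simp: less_imp_le)
    qed
    have segT: "(s,v) \<in> T \<delta>" if "s \<in> {U..u}" for s
      using segD[OF that] segr[OF that] rq by (auto simp: T_def)
    have bdG: "bdd_above (wG ` T \<delta>)" using conjunct2[OF bddT[OF \<delta>]] .
    have Mg0: "Mg \<delta> \<ge> 0" using cSUP_upper[OF q bdG] wG0[of "(u,v)"] by (simp add: Mg_def)
    have Gb: "\<bar>r (s,v) * du \<phi> (s,v)\<bar> \<le> Mg \<delta> * r (s,v) powr (-P)" if "s \<in> {U..u}" for s
    proof -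
      have "wG (s,v) \<le> Mg \<delta>" unfolding Mg_def using cSUP_upper[OF segT[OF that] bdG] .
      moreover have rs: "r (s,v) > 0" using Dest segD[OF that] by blast
      ultimately have "wG (s,v) * r (s,v) powr (-P) \<le> Mg \<delta> * r (s,v) powr (-P)"
        by (simp add: mult_right_mono)
      also have "wG (s,v) * r (s,v) powr (-P) = \<bar>r (s,v) * du \<phi> (s,v)\<bar>"
        using rPm[OF rs] by (simp add: wG_def mult.assoc mult.commute)
      finally show ?thesis .
    qed
    have key: "\<bar>r (u,v) * dv \<phi> (u,v)\<bar> \<le> \<bar>r (U,v) * dv \<phi> (U,v)\<bar> + (K2 * Mg \<delta>)/(P*c1) * r (u,v) powr (-P)"
    proof (rule key1d[where h="\<lambda>s. r (s,v) * dv \<phi> (s,v)" and hd="\<lambda>s. - (dv r (s,v) * du \<phi> (s,v))"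
          and rho="\<lambda>s. r (s,v)" and rd="\<lambda>s. du r (s,v)" and c=c1])
      show "U \<le> u" using uv by simp
      show "c1 > 0" using C1_pos by (simp add: c1_def)
      show "K2 * Mg \<delta> \<ge> 0" using Mg0 C2_pos by (simp add: K2_def)
      show "P > 0" using P2 by simp
      fix s assume s: "s \<in> {U..u}"
      have sD: "(s,v) \<in> D" using segD[OF s] .
      have sQ: "(s,v) \<in> Q" and rs: "r (s,v) > 0" using Dest[OF sD] by auto
      show "((\<lambda>s. r (s,v)) has_real_derivative du r (s,v)) (at s)" using C1_du_deriv[OF r1 sQ] .
      show "r (s,v) > 0" using rs .
      show "c1 \<le> - r (s,v) * du r (s,v)" using Dest[OF sD] by simp
      have "((\<lambda>s. r (s,v) * dv \<phi> (s,v)) has_real_derivative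
              du r (s,v) * dv \<phi> (s,v) + r (s,v) * du (dv \<phi>) (s,v)) (at s)"
        using DERIV_mult[OF C1_du_deriv[OF r1 sQ] C1_du_deriv[OF fv sQ]] by (simp add: algebra_simps)
      moreover have "du r (s,v) * dv \<phi> (s,v) + r (s,v) * du (dv \<phi>) (s,v) = - (dv r (s,v) * du \<phi> (s,v))"
        using eqphi[OF sQ] by simp
      ultimately show "((\<lambda>s. r (s,v) * dv \<phi> (s,v)) has_real_derivative - (dv r (s,v) * du \<phi> (s,v))) (at s)"
        by simp
      have "\<bar>- (dv r (s,v) * du \<phi> (s,v))\<bar> = \<bar>r (s,v) * dv r (s,v)\<bar> * \<bar>r (s,v) * du \<phi> (s,v)\<bar> / (r (s,v))^2"
        using rs by (simp add: abs_mult power2_eq_square field_simps)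
      also have "\<dots> \<le> K2 * (Mg \<delta> * r (s,v) powr (-P)) / (r (s,v))^2"
        using Dest[OF sD] Gb[OF s] rs Mg0 C2_pos
        by (intro divide_right_mono mult_mono) (auto simp: K2_def)
      also have "\<dots> = K2 * Mg \<delta> * r (s,v) powr (-P-2)"
        using powr_m2[OF rs, of P] by (metis times_divide_eq_right mult.assoc)
      finally show "\<bar>- (dv r (s,v) * du \<phi> (s,v))\<bar> \<le> K2 * Mg \<delta> * r (s,v) powr (-P-2)" .
    qed
    have ru: "r (u,v) > 0" using Dest[OF qD] by blast
    have U1: "U \<in> {U..u}" using uv by simp
    have rU: "r (U,v) > 0" using Dest[OF segD[OF U1]] by blast
    have "wF (u,v) \<le> (\<bar>r (U,v) * dv \<phi> (U,v)\<bar> + (K2 * Mg \<delta>)/(P*c1) * r (u,v) powr (-P)) * r (u,v) powr P"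
      unfolding wF_def using key by (simp add: mult_right_mono)
    also have "\<dots> = \<bar>r (U,v) * dv \<phi> (U,v)\<bar> * r (u,v) powr P + \<theta>1 * Mg \<delta>"
      using rPm[OF ru] by (simp add: \<theta>1_def algebra_simps)
    also have "\<bar>r (U,v) * dv \<phi> (U,v)\<bar> * r (u,v) powr P \<le> wF (U,v)"
      unfolding wF_def using segr[OF U1] ru P2 by (intro mult_left_mono powr_mono2) auto
    also have "wF (U,v) \<le> A"
    proof -
      have "wF (U,v) \<le> A0" using A0 uv by auto
      then show ?thesis by (simp add: A_def)
    qed
    finally show ?thesis by simp
  qed
  have claimG: "wG (u,v) \<le> B + \<theta>2 * Mf \<delta>" if \<delta>: "\<delta> > 0" and q: "(u,v) \<in> T \<delta>" for \<delta> u v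
  proof -
    have qD: "(u,v) \<in> D" and rq: "\<delta> \<le> r (u,v)" using q by (auto simp: T_def)
    have uv: "U \<le> u" "u \<le> 0" "U \<le> v" "v \<le> 0" "(u,v) \<noteq> (0,0)" using qD Dchar by (auto simp: Sq_def)
    have segD: "(u,t) \<in> D" if "t \<in> {U..v}" for t
      using that uv Dchar by (auto simp: Sq_def)
    have segr: "r (u,v) \<le> r (u,t)" if "t \<in> {U..v}" for t
    proof (rule decr1d[where rho="\<lambda>x. r (u,x)" and rd="\<lambda>x. dv r (u,x)" and a=t and x=v])
      show "t \<le> v" using that by simp
      fix x assume x: "x \<in> {t..v}"
      then have "(u,x) \<in> D" using that segD by auto
      then show "((\<lambda>x. r (u,x)) has_real_derivative dv r (u,x)) (at x)" "dv r (u,x) \<le> 0"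
        using Dest C1_dv_deriv[OF r1] by (auto simp: less_imp_le)
    qed
    have segT: "(u,t) \<in> T \<delta>" if "t \<in> {U..v}" for t
      using segD[OF that] segr[OF that] rq by (auto simp: T_def)
    have bdF: "bdd_above (wF ` T \<delta>)" using conjunct1[OF bddT[OF \<delta>]] .
    have Mf0: "Mf \<delta> \<ge> 0" using cSUP_upper[OF q bdF] wF0[of "(u,v)"] by (simp add: Mf_def)
    have Fb: "\<bar>r (u,t) * dv \<phi> (u,t)\<bar> \<le> Mf \<delta> * r (u,t) powr (-P)" if "t \<in> {U..v}" for t
    proof -
      have "wF (u,t) \<le> Mf \<delta>" unfolding Mf_def using cSUP_upper[OF segT[OF that] bdF] .
      moreover have rs: "r (u,t) > 0" using Dest segD[OF that] by blast
      ultimately have "wF (u,t) * r (u,t) powr (-P) \<le> Mf \<delta> * r (u,t) powr (-P)"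
        by (simp add: mult_right_mono)
      also have "wF (u,t) * r (u,t) powr (-P) = \<bar>r (u,t) * dv \<phi> (u,t)\<bar>"
        using rPm[OF rs] by (simp add: wF_def mult.assoc mult.commute)
      finally show ?thesis .
    qed
    have key: "\<bar>r (u,v) * du \<phi> (u,v)\<bar> \<le> \<bar>r (u,U) * du \<phi> (u,U)\<bar> + (K1 * Mf \<delta>)/(P*c2) * r (u,v) powr (-P)"
    proof (rule key1d[where h="\<lambda>t. r (u,t) * du \<phi> (u,t)" and hd="\<lambda>t. - (du r (u,t) * dv \<phi> (u,t))"
          and rho="\<lambda>t. r (u,t)" and rd="\<lambda>t. dv r (u,t)" and c=c2])
      show "U \<le> v" using uv by simp
      show "c2 > 0" using C2_pos by (simp add: c2_def)
      show "K1 * Mf \<delta> \<ge> 0" using Mf0 C1_pos by (simp add: K1_def)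
      show "P > 0" using P2 by simp
      fix t assume t: "t \<in> {U..v}"
      have sD: "(u,t) \<in> D" using segD[OF t] .
      have sQ: "(u,t) \<in> Q" and rs: "r (u,t) > 0" using Dest[OF sD] by auto
      show "((\<lambda>t. r (u,t)) has_real_derivative dv r (u,t)) (at t)" using C1_dv_deriv[OF r1 sQ] .
      show "r (u,t) > 0" using rs .
      show "c2 \<le> - r (u,t) * dv r (u,t)" using Dest[OF sD] by simp
      have "((\<lambda>t. r (u,t) * du \<phi> (u,t)) has_real_derivative
              dv r (u,t) * du \<phi> (u,t) + r (u,t) * dv (du \<phi>) (u,t)) (at t)"
        using DERIV_mult[OF C1_dv_deriv[OF r1 sQ] C1_dv_deriv[OF fu sQ]] by (simp add: algebra_simps)
      moreover have "dv r (u,t) * du \<phi> (u,t) + r (u,t) * dv (du \<phi>) (u,t) = - (du r (u,t) * dv \<phi> (u,t))"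
        using eqphi[OF sQ] sw[OF sQ] by simp
      ultimately show "((\<lambda>t. r (u,t) * du \<phi> (u,t)) has_real_derivative - (du r (u,t) * dv \<phi> (u,t))) (at t)"
        by simp
      have "\<bar>- (du r (u,t) * dv \<phi> (u,t))\<bar> = \<bar>r (u,t) * du r (u,t)\<bar> * \<bar>r (u,t) * dv \<phi> (u,t)\<bar> / (r (u,t))^2"
        using rs by (simp add: abs_mult power2_eq_square field_simps)
      also have "\<dots> \<le> K1 * (Mf \<delta> * r (u,t) powr (-P)) / (r (u,t))^2"
        using Dest[OF sD] Fb[OF t] rs Mf0 C1_pos
        by (intro divide_right_mono mult_mono) (auto simp: K1_def)
      also have "\<dots> = K1 * Mf \<delta> * r (u,t) powr (-P-2)"
        using powr_m2[OF rs, of P] by (metis times_divide_eq_right mult.assoc)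
      finally show "\<bar>- (du r (u,t) * dv \<phi> (u,t))\<bar> \<le> K1 * Mf \<delta> * r (u,t) powr (-P-2)" .
    qed
    have ru: "r (u,v) > 0" using Dest[OF qD] by blast
    have U1: "U \<in> {U..v}" using uv by simp
    have "wG (u,v) \<le> (\<bar>r (u,U) * du \<phi> (u,U)\<bar> + (K1 * Mf \<delta>)/(P*c2) * r (u,v) powr (-P)) * r (u,v) powr P"
      unfolding wG_def using key by (simp add: mult_right_mono)
    also have "\<dots> = \<bar>r (u,U) * du \<phi> (u,U)\<bar> * r (u,v) powr P + \<theta>2 * Mf \<delta>"
      using rPm[OF ru] by (simp add: \<theta>2_def algebra_simps)
    also have "\<bar>r (u,U) * du \<phi> (u,U)\<bar> * r (u,v) powr P \<le> wG (u,U)"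
      unfolding wG_def using segr[OF U1] ru P2 by (intro mult_left_mono powr_mono2) auto
    also have "wG (u,U) \<le> B"
    proof -
      have "wG (u,U) \<le> B0" using B0 uv by auto
      then show ?thesis by (simp add: B_def)
    qed
    finally show ?thesis by simp
  qed
  define Fb where "Fb = (A + \<theta>1*B)/(1 - \<theta>1*\<theta>2)"
  define Gb where "Gb = (B + \<theta>2*A)/(1 - \<theta>1*\<theta>2)"
  have A0': "A \<ge> 0" "B \<ge> 0" by (simp_all add: A_def B_def)
  have Fb0: "Fb \<ge> 0" "Gb \<ge> 0" using A0' th0 th12 by (simp_all add: Fb_def Gb_def)
  define I0 where "I0 = Fb + Gb + 1"
  have bounds: "wF p \<le> Fb \<and> wG p \<le> Gb" if pD: "p \<in> D" for p
  proof -
    obtain u v where p: "p = (u,v)" by force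
    define \<delta> where "\<delta> = r p"
    have \<delta>0: "\<delta> > 0" using Dest[OF pD] by (simp add: \<delta>_def)
    have pT: "p \<in> T \<delta>" using pD by (simp add: T_def \<delta>_def)
    have ne: "T \<delta> \<noteq> {}" using pT by blast
    have "Mf \<delta> \<le> A + \<theta>1 * Mg \<delta>" unfolding Mf_def
      by (rule cSUP_least[OF ne]) (use claimF[OF \<delta>0] in auto)
    moreover have "Mg \<delta> \<le> B + \<theta>2 * Mf \<delta>" unfolding Mg_def
      by (rule cSUP_least[OF ne]) (use claimG[OF \<delta>0] in auto)
    ultimately have "Mf \<delta> \<le> Fb" "Mg \<delta> \<le> Gb" using lin2 th0 th12 unfolding Fb_def Gb_def by blast+
    moreover have "wF p \<le> Mf \<delta>" "wG p \<le> Mg \<delta>" unfolding Mf_def Mg_def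
      using cSUP_upper[OF pT] bddT[OF \<delta>0] by auto
    ultimately show ?thesis by linarith
  qed
  have conv: "\<bar>r p * g\<bar> * r p powr P = \<bar>g\<bar> * r p powr (3 + \<alpha>)" if "r p > 0" for p g
  proof -
    have e: "3 + \<alpha> = 1 + P" by (simp add: P_def)
    have "r p powr (3 + \<alpha>) = r p powr 1 * r p powr P" unfolding e by (rule powr_add)
    also have "\<dots> = r p * r p powr P" using that by simp
    finally show ?thesis using that by (simp add: abs_mult)
  qed
  have DeqL: "{(u, v). U \<le> u \<and> u \<le> 0 \<and> U \<le> v \<and> v \<le> 0 \<and> (u, v) \<in> Q \<and> r (u, v) > 0} = D"
    by (simp add: D_def)
  show "\<exists>U' V' I0 :: real. U' < 0 \<and> V' < 0 \<and> I0 > 0 \<and>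
              (let D0 = {(u, v). U' \<le> u \<and> u \<le> 0 \<and> V' \<le> v \<and> v \<le> 0
                                 \<and> (u, v) \<in> Q \<and> r (u, v) > 0}
               in D0 \<subseteq> trapped_region Q r \<and>
                  (\<forall>p\<in>D0. \<bar>du \<phi> p\<bar> \<le> I0 / r p powr (3 + \<alpha>)
                         \<and> \<bar>dv \<phi> p\<bar> \<le> I0 / r p powr (3 + \<alpha>)))"
  proof (intro exI conjI)
    show "U < 0" "U < 0" by (rule U0)+
    show "I0 > 0" using Fb0 by (simp add: I0_def)
    show "let D0 = {(u, v). U \<le> u \<and> u \<le> 0 \<and> U \<le> v \<and> v \<le> 0 \<and> (u, v) \<in> Q \<and> r (u, v) > 0}
          in D0 \<subseteq> trapped_region Q r \<and>
             (\<forall>p\<in>D0. \<bar>du \<phi> p\<bar> \<le> I0 / r p powr (3 + \<alpha>) \<and> \<bar>dv \<phi> p\<bar> \<le> I0 / r p powr (3 + \<alpha>))"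
      unfolding Let_def DeqL
    proof (intro conjI ballI)
      show "D \<subseteq> trapped_region Q r" using Dest by (auto simp: trapped_region_def)
    next
      fix p assume pD: "p \<in> D"
      have rp: "r p > 0" using Dest[OF pD] by blast
      have rpp: "r p powr (3 + \<alpha>) > 0" using rp by simp
      have "\<bar>du \<phi> p\<bar> * r p powr (3 + \<alpha>) \<le> I0"
        using bounds[OF pD] conv[OF rp, of "du \<phi> p"] Fb0 by (simp add: wG_def I0_def)
      then show "\<bar>du \<phi> p\<bar> \<le> I0 / r p powr (3 + \<alpha>)" using rpp by (simp add: pos_le_divide_eq)
      have "\<bar>dv \<phi> p\<bar> * r p powr (3 + \<alpha>) \<le> I0"
        using bounds[OF pD] conv[OF rp, of "dv \<phi> p"] Fb0 by (simp add: wF_def I0_def)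
      then show "\<bar>dv \<phi> p\<bar> \<le> I0 / r p powr (3 + \<alpha>)" using rpp by (simp add: pos_le_divide_eq)
    qed
  qed
qed

end
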